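(* Let $\Sigma\cup\{x|y\}$ be a finite set of exclusion atoms. The problem of deciding whether $\Sigma\vdash x|y$ is decidable.
   Context: Letters $x,y,z,u,v,w,\dots$ denote finite tuples of variables; juxtaposition denotes concatenation. An exclusion atom is an expression $x|y$ with $|x|=|y|$. $\Sigma\vdash x|y$ means $x|y$ is derivable from $\Sigma$ using the rules (schemata over arbitrary tuples, atoms well-formed): (E1) $x|x\vdash y|z$; (E2) $x|y\vdash y|x$; (E3) $x|y\vdash xu|yv$; (E4) $xuu|yvv\vdash xu|yv$; (E5) $xyz|uvw\vdash xzy|uwv$ where $|x|=|u|$ and $|y|=|v|$; (E6) $xw|yw\vdash zz|xy$. *)

theory Defs
  imports Main "HOL-Library.Nat_Bijection"
begin

text \<open>Variables are natural numbers, tuples are lists of variables.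
  An exclusion atom x|y is a pair (x, y) of tuples; it is well-formed iff |x| = |y|.\<close>

type_synonym var = nat
type_synonym tuple = "var list"
type_synonym atom = "tuple \<times> tuple"

definition wf_atom :: "atom \<Rightarrow> bool" where
  "wf_atom a \<longleftrightarrow> length (fst a) = length (snd a)"

inductive derivable :: "atom set \<Rightarrow> atom \<Rightarrow> bool" for \<Sigma> :: "atom set" where
  Hyp: "a \<in> \<Sigma> \<Longrightarrow> wf_atom a \<Longrightarrow> derivable \<Sigma> a"
| E1: "derivable \<Sigma> (x, x) \<Longrightarrow> length y = length z \<Longrightarrow> derivable \<Sigma> (y, z)"
| E2: "derivable \<Sigma> (x, y) \<Longrightarrow> derivable \<Sigma> (y, x)"
| E3: "derivable \<Sigma> (x, y) \<Longrightarrow> length u = length v \<Longrightarrow> derivable \<Sigma> (x @ u, y @ v)"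
| E4: "length x = length y \<Longrightarrow> length u = length v \<Longrightarrow>
       derivable \<Sigma> (x @ u @ u, y @ v @ v) \<Longrightarrow> derivable \<Sigma> (x @ u, y @ v)"
| E5: "length x = length u \<Longrightarrow> length y = length v \<Longrightarrow> length z = length w \<Longrightarrow>
       derivable \<Sigma> (x @ y @ z, u @ v @ w) \<Longrightarrow> derivable \<Sigma> (x @ z @ y, u @ w @ v)"
| E6: "length x = length y \<Longrightarrow> length z = length x \<Longrightarrow>
       derivable \<Sigma> (x @ w, y @ w) \<Longrightarrow> derivable \<Sigma> (z @ z, x @ y)"

datatype recf =
    Zero
  | Succ
  | Proj nat
  | Comp recf "recf list"
  | Prim recf recf
  | Mu recf

inductive eval :: "recf \<Rightarrow> nat list \<Rightarrow> nat \<Rightarrow> bool" where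
  ev_Zero: "eval Zero xs 0"
| ev_Succ: "eval Succ (x # xs) (Suc x)"
| ev_Proj: "i < length xs \<Longrightarrow> eval (Proj i) xs (xs ! i)"
| ev_Comp: "length ys = length gs \<Longrightarrow> (\<forall>i < length gs. eval (gs ! i) xs (ys ! i)) \<Longrightarrow>
            eval f ys r \<Longrightarrow> eval (Comp f gs) xs r"
| ev_Prim0: "eval f xs r \<Longrightarrow> eval (Prim f g) (0 # xs) r"
| ev_PrimS: "eval (Prim f g) (k # xs) r0 \<Longrightarrow> eval g (k # r0 # xs) r \<Longrightarrow>
             eval (Prim f g) (Suc k # xs) r"
| ev_Mu: "eval f (r # xs) 0 \<Longrightarrow> (\<forall>k < r. \<exists>v. v > 0 \<and> eval f (k # xs) v) \<Longrightarrow>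
          eval (Mu f) xs r"

definition encode_tuple :: "tuple \<Rightarrow> nat" where
  "encode_tuple x = list_encode x"

definition encode_atom :: "atom \<Rightarrow> nat" where
  "encode_atom a = prod_encode (encode_tuple (fst a), encode_tuple (snd a))"

text \<open>An instance: a finite set Sigma (given by a list enumerating it) and a goal atom.\<close>

definition encode_instance :: "atom list \<Rightarrow> atom \<Rightarrow> nat" where
  "encode_instance S a = prod_encode (list_encode (map encode_atom S), encode_atom a)"

end

theory Submission
  imports Defs
begin

definition D :: "atom set \<Rightarrow> (nat \<times> nat) list \<Rightarrow> bool" where
  "D \<Sigma> cs \<longleftrightarrow> derivable \<Sigma> (map fst cs, map snd cs)"

lemma derivable_len: "derivable \<Sigma> a \<Longrightarrow> length (fst a) = length (snd a)"
  by (induction rule: derivable.induct) (auto simp: wf_atom_def)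

lemma D_zip: "length x = length y \<Longrightarrow> D \<Sigma> (zip x y) \<longleftrightarrow> derivable \<Sigma> (x, y)"
  by (simp add: D_def)

lemma D_E3: "D \<Sigma> cs \<Longrightarrow> D \<Sigma> (cs @ ds)"
  unfolding D_def using derivable.E3[of \<Sigma> "map fst cs" "map snd cs" "map fst ds" "map snd ds"] by simp

lemma D_E5: "D \<Sigma> (as @ bs @ cs) \<Longrightarrow> D \<Sigma> (as @ cs @ bs)"
  unfolding D_def using derivable.E5[of "map fst as" "map snd as" "map fst bs" "map snd bs"
     "map fst cs" "map snd cs" \<Sigma>] by simp

lemma D_E4: "D \<Sigma> (as @ bs @ bs) \<Longrightarrow> D \<Sigma> (as @ bs)"
  unfolding D_def using derivable.E4[of "map fst as" "map snd as" "map fst bs" "map snd bs" \<Sigma>] by simp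

lemma D_E2: "D \<Sigma> cs \<Longrightarrow> D \<Sigma> (map prod.swap cs)"
  unfolding D_def using derivable.E2[of \<Sigma> "map fst cs" "map snd cs"] by (simp add: comp_def)

lemma D_E1: "D \<Sigma> cs \<Longrightarrow> \<forall>(u,v)\<in>set cs. u = v \<Longrightarrow> D \<Sigma> ds"
proof -
  assume a: "D \<Sigma> cs" "\<forall>(u,v)\<in>set cs. u = v"
  have "map fst cs = map snd cs" using a(2) by (induction cs) auto
  have "derivable \<Sigma> (map snd cs, map snd cs)" using a(1) unfolding D_def
    by (simp only: \<open>map fst cs = map snd cs\<close>)
  then show ?thesis using derivable.E1[of \<Sigma> "map snd cs" "map fst ds" "map snd ds"]
    unfolding D_def by simp
qed

lemma D_E6: "D \<Sigma> (cs @ map (\<lambda>w. (w,w)) ws) \<Longrightarrow> length zs = length cs \<Longrightarrow>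
   D \<Sigma> (zip zs (map fst cs) @ zip zs (map snd cs))"
  unfolding D_def using derivable.E6[of "map fst cs" "map snd cs" zs \<Sigma> ws]
  by (simp add: comp_def)

lemma D_remove: "D \<Sigma> (c # rest) \<Longrightarrow> c \<in> set rest \<Longrightarrow> D \<Sigma> rest"
proof -
  assume a: "D \<Sigma> (c # rest)" "c \<in> set rest"
  then obtain r1 r2 where r: "rest = r1 @ c # r2" by (meson split_list)
  have "D \<Sigma> ([] @ [c] @ (r1 @ c # r2))" using a r by simp
  then have "D \<Sigma> ([] @ (r1 @ c # r2) @ [c])" by (rule D_E5)
  then have "D \<Sigma> (r1 @ [c] @ (r2 @ [c]))" by simp
  then have "D \<Sigma> (r1 @ (r2 @ [c]) @ [c])" by (rule D_E5)
  then have "D \<Sigma> ((r1 @ r2) @ [c] @ [c])" by simp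
  then have "D \<Sigma> ((r1 @ r2) @ [c])" by (rule D_E4)
  then have "D \<Sigma> (r1 @ r2 @ [c])" by simp
  then have "D \<Sigma> (r1 @ [c] @ r2)" by (rule D_E5)
  then show ?thesis using r by simp
qed

lemma D_super_aux: "D \<Sigma> (cs @ ds) \<Longrightarrow> set cs \<subseteq> set ds \<Longrightarrow> D \<Sigma> ds"
proof (induction cs)
  case Nil then show ?case by simp
next
  case (Cons c cs)
  have "D \<Sigma> (cs @ ds)" by (rule D_remove[of _ c]) (use Cons.prems in auto)
  then show ?case using Cons by auto
qed

lemma D_super: "D \<Sigma> cs \<Longrightarrow> set cs \<subseteq> set ds \<Longrightarrow> D \<Sigma> ds"
  using D_super_aux D_E3 by blast

definition M :: "(nat \<times> nat) set \<Rightarrow> (nat \<times> nat) set" where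
  "M Q = {(u,v). \<exists>z. (z,u) \<in> Q \<and> (z,v) \<in> Q}"

definition EqC :: "(nat \<times> nat) set \<Rightarrow> (nat \<times> nat) set" where
  "EqC R = (R \<union> R\<inverse>)\<^sup>*"

definition cset :: "atom \<Rightarrow> (nat \<times> nat) set" where
  "cset a = set (zip (fst a) (snd a))"

definition Good :: "atom set \<Rightarrow> (nat \<times> nat) set \<Rightarrow> bool" where
  "Good \<Sigma> Q \<longleftrightarrow> (\<exists>a\<in>\<Sigma>. cset a \<subseteq> Q \<or> cset a \<subseteq> Q\<inverse>
     \<or> cset a \<subseteq> EqC (M Q) \<or> cset a \<subseteq> EqC (M (Q\<inverse>)))"

lemma GoodE: "Good \<Sigma> Q \<Longrightarrow> (\<And>a. a \<in> \<Sigma> \<Longrightarrow> cset a \<subseteq> Q \<or> cset a \<subseteq> Q\<inverse>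
     \<or> cset a \<subseteq> EqC (M Q) \<or> cset a \<subseteq> EqC (M (Q\<inverse>)) \<Longrightarrow> thesis) \<Longrightarrow> thesis"
  unfolding Good_def by blast

lemma GoodI1: "a \<in> \<Sigma> \<Longrightarrow> cset a \<subseteq> Q \<Longrightarrow> Good \<Sigma> Q"
  unfolding Good_def by blast
lemma GoodI2: "a \<in> \<Sigma> \<Longrightarrow> cset a \<subseteq> Q\<inverse> \<Longrightarrow> Good \<Sigma> Q"
  unfolding Good_def by blast
lemma GoodI3: "a \<in> \<Sigma> \<Longrightarrow> cset a \<subseteq> EqC (M Q) \<Longrightarrow> Good \<Sigma> Q"
  unfolding Good_def by blast
lemma GoodI4: "a \<in> \<Sigma> \<Longrightarrow> cset a \<subseteq> EqC (M (Q\<inverse>)) \<Longrightarrow> Good \<Sigma> Q"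
  unfolding Good_def by blast

lemma EqC_mono: "R \<subseteq> S \<Longrightarrow> EqC R \<subseteq> EqC S"
  unfolding EqC_def by (intro rtrancl_mono) auto

lemma M_mono: "Q \<subseteq> P \<Longrightarrow> M Q \<subseteq> M P"
  unfolding M_def by auto

lemma EqC_sym: "(a,b) \<in> EqC R \<Longrightarrow> (b,a) \<in> EqC R"
proof -
  assume "(a,b) \<in> EqC R"
  then have "(b,a) \<in> ((R \<union> R\<inverse>)\<inverse>)\<^sup>*" unfolding EqC_def by (simp add: rtrancl_converse)
  moreover have "(R \<union> R\<inverse>)\<inverse> = R \<union> R\<inverse>" by auto
  ultimately show ?thesis unfolding EqC_def by simp
qed

lemma EqC_trans: "(a,b) \<in> EqC R \<Longrightarrow> (b,c) \<in> EqC R \<Longrightarrow> (a,c) \<in> EqC R"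
  unfolding EqC_def by (meson rtrancl_trans)

lemma EqC_refl: "(a,a) \<in> EqC R"
  unfolding EqC_def by simp

lemma EqC_base: "(a,b) \<in> R \<Longrightarrow> (a,b) \<in> EqC R"
  unfolding EqC_def by auto

lemma EqC_least: "R \<subseteq> K \<Longrightarrow> (\<And>a b. (a,b) \<in> K \<Longrightarrow> (b,a) \<in> K) \<Longrightarrow>
   (\<And>a b c. (a,b) \<in> K \<Longrightarrow> (b,c) \<in> K \<Longrightarrow> (a,c) \<in> K) \<Longrightarrow> (\<And>a. (a,a) \<in> K) \<Longrightarrow> EqC R \<subseteq> K"
proof
  fix p assume a: "R \<subseteq> K" "\<And>a b. (a,b) \<in> K \<Longrightarrow> (b,a) \<in> K"
    "\<And>a b c. (a,b) \<in> K \<Longrightarrow> (b,c) \<in> K \<Longrightarrow> (a,c) \<in> K" "\<And>a. (a,a) \<in> K" and p: "p \<in> EqC R"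
  obtain u v where pv: "p = (u,v)" by force
  have "(u,v) \<in> (R \<union> R\<inverse>)\<^sup>*" using p pv unfolding EqC_def by simp
  then have "(u,v) \<in> K"
  proof (induction rule: rtrancl_induct)
    case base then show ?case by (rule a(4))
  next
    case (step y z)
    have "(y,z) \<in> K"
    proof (cases "(y,z) \<in> R")
      case True with a(1) show ?thesis by blast
    next
      case False then have "(z,y) \<in> R" using step(2) by simp
      with a(1) have "(z,y) \<in> K" by blast
      then show ?thesis by (rule a(2))
    qed
    with step(3) show ?case by (rule a(3))
  qed
  then show "p \<in> K" using pv by simp
qed

lemma Good_mono: "Good \<Sigma> Q \<Longrightarrow> Q \<subseteq> P \<Longrightarrow> Good \<Sigma> P"
proof -
  assume g: "Good \<Sigma> Q" and s: "Q \<subseteq> P"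
  have s1: "EqC (M Q) \<subseteq> EqC (M P)" using s by (intro EqC_mono M_mono)
  have s3: "Q\<inverse> \<subseteq> P\<inverse>" using s by auto
  have s2: "EqC (M (Q\<inverse>)) \<subseteq> EqC (M (P\<inverse>))" using s3 by (intro EqC_mono M_mono)
  from g obtain a where a: "a \<in> \<Sigma>" and c: "cset a \<subseteq> Q \<or> cset a \<subseteq> Q\<inverse>
     \<or> cset a \<subseteq> EqC (M Q) \<or> cset a \<subseteq> EqC (M (Q\<inverse>))" by (rule GoodE)
  from c show ?thesis
  proof (elim disjE)
    assume "cset a \<subseteq> Q" then show ?thesis using a s by (intro GoodI1) auto
  next
    assume "cset a \<subseteq> Q\<inverse>" then show ?thesis using a s3 by (intro GoodI2) auto
  next
    assume "cset a \<subseteq> EqC (M Q)" then show ?thesis using a s1 by (intro GoodI3) auto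
  next
    assume "cset a \<subseteq> EqC (M (Q\<inverse>))" then show ?thesis using a s2 by (intro GoodI4) auto
  qed
qed

lemma Good_swap: "Good \<Sigma> Q \<Longrightarrow> Good \<Sigma> (Q\<inverse>)"
  unfolding Good_def by auto

lemma diag_EqC: "Q \<subseteq> Id \<Longrightarrow> EqC (M Q) \<subseteq> Id"
proof -
  assume "Q \<subseteq> Id"
  then have "M Q \<subseteq> Id" unfolding M_def by auto
  then show ?thesis by (intro EqC_least) auto
qed

lemma Good_diag: "Good \<Sigma> Q \<Longrightarrow> Q \<subseteq> Id \<Longrightarrow> Good \<Sigma> P"
proof -
  assume g: "Good \<Sigma> Q" and d: "Q \<subseteq> Id"
  have d2: "Q\<inverse> \<subseteq> Id" using d by auto
  have I: "Id \<subseteq> EqC (M P)" using EqC_refl by auto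
  have e1: "EqC (M Q) \<subseteq> Id" using diag_EqC[OF d] .
  have e2: "EqC (M (Q\<inverse>)) \<subseteq> Id" using diag_EqC[OF d2] .
  from g obtain a where a: "a \<in> \<Sigma>" and c: "cset a \<subseteq> Q \<or> cset a \<subseteq> Q\<inverse>
     \<or> cset a \<subseteq> EqC (M Q) \<or> cset a \<subseteq> EqC (M (Q\<inverse>))" by (rule GoodE)
  have "cset a \<subseteq> Id" using c d d2 e1 e2 by (elim disjE) (rule subset_trans; assumption)+
  then show ?thesis using a I by (intro GoodI3) auto
qed

lemma set_zip_app: "length x = length y \<Longrightarrow> set (zip (x @ u) (y @ v)) = set (zip x y) \<union> set (zip u v)"
  by simp

lemma in_zipE: "(a,b) \<in> set (zip x y) \<Longrightarrow> (\<And>i. i < length x \<Longrightarrow> i < length y \<Longrightarrow> a = x!i \<Longrightarrow> b = y!i \<Longrightarrow> P) \<Longrightarrow> P"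
  by (auto simp: in_set_zip)

lemma E6_sound:
  assumes g: "Good \<Sigma> (set (zip (x @ w) (y @ w)))" and l: "length x = length y" "length z = length x"
  shows "Good \<Sigma> (set (zip (z @ z) (x @ y)))"
proof -
  let ?P = "set (zip (x @ w) (y @ w))"
  let ?C = "set (zip (z @ z) (x @ y))"
  let ?K = "EqC (M ?C)"
  have P: "?P = set (zip x y) \<union> set (zip w w)" using l by simp
  have C: "?C = set (zip z x) \<union> set (zip z y)" using l by simp
  have xy: "(u,v) \<in> M ?C" if "(u,v) \<in> set (zip x y)" for u v
  proof -
    from that obtain i where i: "i < length x" "u = x!i" "v = y!i" by (auto simp: in_set_zip)
    have "(z!i, u) \<in> ?C" "(z!i, v) \<in> ?C" using i l unfolding C by (auto simp: in_set_zip)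
    then show ?thesis unfolding M_def by auto
  qed
  have PK: "?P \<subseteq> ?K"
  proof
    fix p assume "p \<in> ?P"
    then consider "p \<in> set (zip x y)" | "p \<in> set (zip w w)" using P by auto
    then show "p \<in> ?K"
    proof cases
      case 1
      obtain u v where pv: "p = (u,v)" by force
      show ?thesis using 1 xy[of u v] EqC_base pv by auto
    next
      case 2
      then obtain i where "i < length w" "p = (w!i, w!i)" by (metis in_set_zip prod.collapse)
      then show ?thesis using EqC_refl by simp
    qed
  qed
  have MK: "M ?P \<subseteq> ?K"
  proof
    fix p assume "p \<in> M ?P"
    then obtain a b c where "p = (a,b)" "(c,a) \<in> ?P" "(c,b) \<in> ?P" unfolding M_def by blast
    then show "p \<in> ?K" using PK EqC_sym EqC_trans by blast
  qed
  have MK2: "M (?P\<inverse>) \<subseteq> ?K"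
  proof
    fix p assume "p \<in> M (?P\<inverse>)"
    then obtain a b c where "p = (a,b)" "(a,c) \<in> ?P" "(b,c) \<in> ?P" unfolding M_def by blast
    then show "p \<in> ?K" using PK EqC_sym EqC_trans by blast
  qed
  have K1: "EqC (M ?P) \<subseteq> ?K" using MK
    by (intro EqC_least) (auto intro: EqC_trans EqC_sym EqC_refl)
  have K2: "EqC (M (?P\<inverse>)) \<subseteq> ?K" using MK2
    by (intro EqC_least) (auto intro: EqC_trans EqC_sym EqC_refl)
  have K3: "?P\<inverse> \<subseteq> ?K" using PK by (auto intro: EqC_sym)
  from g obtain a where a: "a \<in> \<Sigma>" and c: "cset a \<subseteq> ?P \<or> cset a \<subseteq> ?P\<inverse>
     \<or> cset a \<subseteq> EqC (M ?P) \<or> cset a \<subseteq> EqC (M (?P\<inverse>))" by (rule GoodE)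
  have "cset a \<subseteq> ?K"
    using c PK K1 K2 K3 by (elim disjE) (rule subset_trans; assumption)+
  then show ?thesis by (rule GoodI3[OF a])
qed

theorem soundness: "derivable \<Sigma> a \<Longrightarrow> Good \<Sigma> (set (zip (fst a) (snd a)))"
proof (induction rule: derivable.induct)
  case (Hyp a) then show ?case by (intro GoodI1[of a]) (auto simp: cset_def)
next
  case (E1 x y z)
  have "set (zip x x) \<subseteq> Id" by (auto simp: in_set_zip)
  then show ?case using E1 Good_diag by simp
next
  case (E2 x y)
  have "set (zip y x) = (set (zip x y))\<inverse>" by (auto simp: in_set_zip)
  then show ?case using E2 Good_swap by simp
next
  case (E3 x y u v)
  have "length x = length y" using derivable_len E3(1) by fastforce
  then have "set (zip x y) \<subseteq> set (zip (x @ u) (y @ v))" by simp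
  then show ?case using E3 Good_mono by simp
next
  case (E4 x y u v)
  have "set (zip (x @ u @ u) (y @ v @ v)) = set (zip (x @ u) (y @ v))" using E4 by auto
  then show ?case using E4 by simp
next
  case (E5 x u y v z w)
  have "set (zip (x @ y @ z) (u @ v @ w)) = set (zip (x @ z @ y) (u @ w @ v))" using E5 by auto
  then show ?case using E5 by simp
next
  case (E6 x y z w)
  then show ?case using E6_sound by simp
qed

lemma step_gen:
  assumes d: "D \<Sigma> cs" and h: "\<forall>p\<in>set cs. fst p \<noteq> snd p \<longrightarrow> (\<exists>z. (z, fst p) \<in> T \<and> (z, snd p) \<in> T)"
  shows "\<exists>ds. D \<Sigma> ds \<and> set ds \<subseteq> T"
proof -
  define nd where "nd = filter (\<lambda>p. fst p \<noteq> snd p) cs"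
  define dg where "dg = filter (\<lambda>p. fst p = snd p) cs"
  have "set cs \<subseteq> set (nd @ dg)" unfolding nd_def dg_def by auto
  then have d1: "D \<Sigma> (nd @ dg)" using d D_super by blast
  have "map (\<lambda>w. (w,w)) (map fst dg) = dg"
  proof -
    have "map (\<lambda>w. (w,w)) (map fst dg) = map (\<lambda>p. (fst p, fst p)) dg" by simp
    also have "\<dots> = dg" by (rule map_idI) (auto simp: dg_def prod_eq_iff)
    finally show ?thesis .
  qed
  then have d2: "D \<Sigma> (nd @ map (\<lambda>w. (w,w)) (map fst dg))" using d1 by simp
  define zs where "zs = map (\<lambda>p. SOME z. (z, fst p) \<in> T \<and> (z, snd p) \<in> T) nd"
  have lz: "length zs = length nd" unfolding zs_def by simp
  have d3: "D \<Sigma> (zip zs (map fst nd) @ zip zs (map snd nd))" using D_E6[OF d2 lz] .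
  have zi: "(zs!i, fst (nd!i)) \<in> T \<and> (zs!i, snd (nd!i)) \<in> T" if "i < length nd" for i
  proof -
    have "nd!i \<in> set cs" "fst (nd!i) \<noteq> snd (nd!i)" using that nth_mem[OF that] unfolding nd_def by auto
    then have "\<exists>z. (z, fst (nd!i)) \<in> T \<and> (z, snd (nd!i)) \<in> T" using h by blast
    from someI_ex[OF this] show ?thesis unfolding zs_def using that by simp
  qed
  have "set (zip zs (map fst nd) @ zip zs (map snd nd)) \<subseteq> T"
  proof
    fix p assume "p \<in> set (zip zs (map fst nd) @ zip zs (map snd nd))"
    then consider "p \<in> set (zip zs (map fst nd))" | "p \<in> set (zip zs (map snd nd))" by auto
    then show "p \<in> T"
    proof cases
      case 1 then obtain i where "i < length nd" "p = (zs!i, fst (nd!i))" using lz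
        by (auto simp: set_zip)
      then show ?thesis using zi by auto
    next
      case 2 then obtain i where "i < length nd" "p = (zs!i, snd (nd!i))" using lz
        by (auto simp: set_zip)
      then show ?thesis using zi by auto
    qed
  qed
  then show ?thesis using d3 by blast
qed

definition N :: "(nat \<times> nat) set \<Rightarrow> (nat \<times> nat) set" where
  "N R = {(u,v). \<exists>z. (z,u) \<in> R \<union> Id \<and> (z,v) \<in> R \<union> Id}"

lemma N_step:
  assumes d: "D \<Sigma> cs" and s: "set cs \<subseteq> N R \<union> Id"
  shows "\<exists>ds. D \<Sigma> ds \<and> set ds \<subseteq> R \<union> Id"
proof (rule step_gen[OF d], intro ballI impI)
  fix p assume p: "p \<in> set cs" "fst p \<noteq> snd p"
  then have "p \<in> N R" using s by (cases p) auto
  then show "\<exists>z. (z, fst p) \<in> R \<union> Id \<and> (z, snd p) \<in> R \<union> Id" unfolding N_def by (cases p) auto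
qed

lemma N_iter: "D \<Sigma> cs \<Longrightarrow> set cs \<subseteq> (N^^t) R \<union> Id \<Longrightarrow> \<exists>ds. D \<Sigma> ds \<and> set ds \<subseteq> R \<union> Id"
proof (induction t arbitrary: cs)
  case 0 then show ?case by auto
next
  case (Suc t)
  then obtain ds where "D \<Sigma> ds" "set ds \<subseteq> (N^^t) R \<union> Id" using N_step[of \<Sigma> cs "(N^^t) R"] by auto
  then show ?case using Suc.IH by blast
qed

lemma N_infl: "X \<subseteq> N X"
  unfolding N_def by auto

lemma N_mono: "X \<subseteq> Y \<Longrightarrow> N X \<subseteq> N Y"
  unfolding N_def by blast

lemma N_sym: "(a,b) \<in> N X \<Longrightarrow> (b,a) \<in> N X"
  unfolding N_def by blast

lemma N_conv: "X\<inverse> \<subseteq> N X"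
  unfolding N_def by blast

lemma N_chain: "s \<le> t \<Longrightarrow> (N^^s) R \<subseteq> (N^^t) R"
proof (induction t)
  case 0 then show ?case by simp
next
  case (Suc t)
  show ?case
  proof (cases "s = Suc t")
    case False
    then have "(N^^s) R \<subseteq> (N^^t) R" using Suc by simp
    also have "\<dots> \<subseteq> (N^^(Suc t)) R" using N_infl by simp
    finally show ?thesis .
  qed simp
qed

lemma N_path: "(a,b) \<in> (R \<union> R\<inverse>)\<^sup>* \<Longrightarrow> \<exists>t. (a,b) \<in> (N^^(Suc t)) R \<union> Id"
proof (induction rule: rtrancl_induct)
  case base then show ?case by auto
next
  case (step c b)
  then obtain t where t: "(a,c) \<in> (N^^(Suc t)) R \<union> Id" by blast
  let ?X = "(N^^(Suc t)) R"
  have "R \<subseteq> ?X" using N_chain[of 0 "Suc t" R] by simp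
  moreover have "R\<inverse> \<subseteq> ?X" using N_conv[of R] N_chain[of 1 "Suc t" R] by auto
  ultimately have cb: "(c,b) \<in> ?X \<union> Id" using step by auto
  have ca: "(c,a) \<in> ?X \<union> Id" using t N_sym[of a c] by auto
  have "(a,b) \<in> N ?X" using ca cb unfolding N_def by blast
  then have "(a,b) \<in> (N^^(Suc (Suc t))) R \<union> Id" by simp
  then show ?case by blast
qed

lemma N_fin: "finite G \<Longrightarrow> G \<subseteq> EqC R \<Longrightarrow> \<exists>t. G \<subseteq> (N^^t) R \<union> Id"
proof (induction rule: finite_induct)
  case empty then show ?case by simp
next
  case (insert p G)
  then obtain t where t: "G \<subseteq> (N^^t) R \<union> Id" by auto
  obtain a b where p: "p = (a,b)" by force
  have "(a,b) \<in> (R \<union> R\<inverse>)\<^sup>*" using insert p unfolding EqC_def by auto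
  then obtain s where s: "(a,b) \<in> (N^^(Suc s)) R \<union> Id" using N_path by blast
  have "G \<subseteq> (N^^(max t (Suc s))) R \<union> Id" using t N_chain[of t "max t (Suc s)" R] by auto
  moreover have "p \<in> (N^^(max t (Suc s))) R \<union> Id" using s p N_chain[of "Suc s" "max t (Suc s)" R] by auto
  ultimately show ?case by blast
qed

lemma reach:
  assumes a: "a \<in> \<Sigma>" "wf_atom a" and g: "set (zip (fst a) (snd a)) \<subseteq> EqC (M Q)"
  shows "\<exists>ds. D \<Sigma> ds \<and> set ds \<subseteq> Q"
proof -
  have "derivable \<Sigma> a" using a by (rule derivable.Hyp)
  then have d0: "D \<Sigma> (zip (fst a) (snd a))" using a(2) D_zip[of "fst a" "snd a" \<Sigma>]
    by (simp add: wf_atom_def)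
  obtain t where "set (zip (fst a) (snd a)) \<subseteq> (N^^t) (M Q) \<union> Id" using N_fin[OF _ g] by blast
  then obtain ds where ds: "D \<Sigma> ds" "set ds \<subseteq> M Q \<union> Id" using N_iter d0 by blast
  have "\<forall>p\<in>set ds. fst p \<noteq> snd p \<longrightarrow> (\<exists>z. (z, fst p) \<in> Q \<and> (z, snd p) \<in> Q)"
  proof (intro ballI impI)
    fix p assume "p \<in> set ds" "fst p \<noteq> snd p"
    then have "p \<in> M Q" using ds by (cases p) auto
    then show "\<exists>z. (z, fst p) \<in> Q \<and> (z, snd p) \<in> Q" unfolding M_def by (cases p) auto
  qed
  then show ?thesis using step_gen[OF ds(1)] by blast
qed

theorem completeness:
  assumes g: "Good \<Sigma> (set (zip x y))" and w: "\<forall>a\<in>\<Sigma>. wf_atom a" and l: "length x = length y"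
  shows "derivable \<Sigma> (x, y)"
proof -
  let ?Q = "set (zip x y)"
  have "\<exists>ds. D \<Sigma> ds \<and> set ds \<subseteq> ?Q"
  proof -
    from g obtain a where a: "a \<in> \<Sigma>" and
      c: "set (zip (fst a) (snd a)) \<subseteq> ?Q \<or> set (zip (fst a) (snd a)) \<subseteq> ?Q\<inverse>
     \<or> set (zip (fst a) (snd a)) \<subseteq> EqC (M ?Q) \<or> set (zip (fst a) (snd a)) \<subseteq> EqC (M (?Q\<inverse>))"
      unfolding Good_def cset_def by blast
    have wa: "wf_atom a" using a w by blast
    have "derivable \<Sigma> a" using a wa by (rule derivable.Hyp)
    then have d0: "D \<Sigma> (zip (fst a) (snd a))" using wa D_zip[of "fst a" "snd a" \<Sigma>]
      by (simp add: wf_atom_def)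
    from c show ?thesis
    proof (elim disjE)
      assume "set (zip (fst a) (snd a)) \<subseteq> ?Q" then show ?thesis using d0 by blast
    next
      assume h: "set (zip (fst a) (snd a)) \<subseteq> ?Q\<inverse>"
      have "set (map prod.swap (zip (fst a) (snd a))) \<subseteq> ?Q" using h by auto
      then show ?thesis using D_E2[OF d0] by blast
    next
      assume "set (zip (fst a) (snd a)) \<subseteq> EqC (M ?Q)" then show ?thesis using reach a wa by blast
    next
      assume "set (zip (fst a) (snd a)) \<subseteq> EqC (M (?Q\<inverse>))"
      then obtain ds where "D \<Sigma> ds" "set ds \<subseteq> ?Q\<inverse>" using reach a wa by blast
      then have "D \<Sigma> (map prod.swap ds)" "set (map prod.swap ds) \<subseteq> ?Q" using D_E2 by auto
      then show ?thesis by blast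
    qed
  qed
  then obtain ds where "D \<Sigma> ds" "set ds \<subseteq> ?Q" by blast
  then have "D \<Sigma> (zip x y)" using D_super by blast
  then show ?thesis using D_zip l by blast
qed

theorem char: "\<forall>a\<in>\<Sigma>. wf_atom a \<Longrightarrow> length x = length y \<Longrightarrow>
   derivable \<Sigma> (x, y) \<longleftrightarrow> Good \<Sigma> (set (zip x y))"
  using soundness[of \<Sigma> "(x,y)"] completeness by auto

definition rc :: "nat \<Rightarrow> (nat list \<Rightarrow> nat) \<Rightarrow> bool" where
  "rc n h \<longleftrightarrow> (\<exists>f. \<forall>xs. length xs = n \<longrightarrow> eval f xs (h xs))"

lemma rc_cong: "rc n f \<Longrightarrow> (\<And>xs. length xs = n \<Longrightarrow> f xs = g xs) \<Longrightarrow> rc n g"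
  unfolding rc_def by metis

lemma rc_cong2: "rc n f \<Longrightarrow> n = m \<Longrightarrow> (\<And>xs. length xs = m \<Longrightarrow> f xs = g xs) \<Longrightarrow> rc m g"
  unfolding rc_def by metis

lemma rc_zero: "rc n (\<lambda>_. 0)"
  unfolding rc_def by (auto intro: ev_Zero)

lemma rc_proj: "i < n \<Longrightarrow> rc n (\<lambda>xs. xs ! i)"
  unfolding rc_def by (auto intro!: exI[of _ "Proj i"] ev_Proj)

lemma rc_succ: "rc n g \<Longrightarrow> rc n (\<lambda>xs. Suc (g xs))"
  unfolding rc_def
proof (elim exE)
  fix f assume f: "\<forall>xs. length xs = n \<longrightarrow> eval f xs (g xs)"
  show "\<exists>f. \<forall>xs. length xs = n \<longrightarrow> eval f xs (Suc (g xs))"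
  proof (intro exI allI impI)
    fix xs :: "nat list" assume l: "length xs = n"
    show "eval (Comp Succ [f]) xs (Suc (g xs))"
      by (rule ev_Comp[of "[g xs]"]) (use f l ev_Succ[of "g xs" "[]"] in auto)
  qed
qed

lemma rc_list:
  assumes "\<forall>g\<in>set gs. rc n g"
  shows "\<exists>fs. length fs = length gs \<and> (\<forall>i<length gs. \<forall>xs. length xs = n \<longrightarrow> eval (fs!i) xs ((gs!i) xs))"
  using assms
proof (induction gs)
  case Nil then show ?case by simp
next
  case (Cons g gs)
  then obtain fs where fs: "length fs = length gs" "\<forall>i<length gs. \<forall>xs. length xs = n \<longrightarrow> eval (fs!i) xs ((gs!i) xs)"
    by auto
  obtain f where f: "\<forall>xs. length xs = n \<longrightarrow> eval f xs (g xs)" using Cons.prems unfolding rc_def by auto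
  show ?case
    by (rule exI[of _ "f # fs"]) (use fs f in \<open>auto simp: nth_Cons split: nat.split\<close>)
qed

lemma rc_comp:
  assumes h: "rc (length gs) h" and gs: "\<forall>g\<in>set gs. rc n g"
  shows "rc n (\<lambda>xs. h (map (\<lambda>g. g xs) gs))"
proof -
  obtain fs where fs: "length fs = length gs" "\<forall>i<length gs. \<forall>xs. length xs = n \<longrightarrow> eval (fs!i) xs ((gs!i) xs)"
    using rc_list[OF gs] by auto
  obtain F where F: "\<forall>ys. length ys = length gs \<longrightarrow> eval F ys (h ys)" using h unfolding rc_def by auto
  show ?thesis unfolding rc_def
  proof (intro exI allI impI)
    fix xs :: "nat list" assume l: "length xs = n"
    show "eval (Comp F fs) xs (h (map (\<lambda>g. g xs) gs))"
      by (rule ev_Comp[of "map (\<lambda>g. g xs) gs"]) (use fs F l in auto)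
  qed
qed

lemma rc_prim:
  assumes f: "rc n f" and g: "rc (Suc (Suc n)) g"
  shows "rc (Suc n) (\<lambda>xs. rec_nat (f (tl xs)) (\<lambda>k r. g (k # r # tl xs)) (hd xs))"
proof -
  obtain F where F: "\<forall>xs. length xs = n \<longrightarrow> eval F xs (f xs)" using f unfolding rc_def by auto
  obtain G where G: "\<forall>xs. length xs = Suc (Suc n) \<longrightarrow> eval G xs (g xs)" using g unfolding rc_def by auto
  have main: "eval (Prim F G) (k # ys) (rec_nat (f ys) (\<lambda>k r. g (k # r # ys)) k)" if l: "length ys = n" for k ys
  proof (induction k)
    case 0 then show ?case using F l by (auto intro: ev_Prim0)
  next
    case (Suc k) then show ?case using G l by (auto intro: ev_PrimS)
  qed
  show ?thesis unfolding rc_def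
  proof (intro exI allI impI)
    fix xs :: "nat list" assume l: "length xs = Suc n"
    then obtain k ys where "xs = k # ys" "length ys = n" by (cases xs) auto
    then show "eval (Prim F G) xs (rec_nat (f (tl xs)) (\<lambda>k r. g (k # r # tl xs)) (hd xs))"
      using main by simp
  qed
qed

lemma rc_mu:
  assumes f: "rc (Suc n) f" and ex: "\<And>xs. length xs = n \<Longrightarrow> \<exists>r. f (r # xs) = 0"
  shows "rc n (\<lambda>xs. LEAST r. f (r # xs) = 0)"
proof -
  obtain F where F: "\<forall>xs. length xs = Suc n \<longrightarrow> eval F xs (f xs)" using f unfolding rc_def by auto
  show ?thesis unfolding rc_def
  proof (intro exI allI impI)
    fix xs :: "nat list" assume l: "length xs = n"
    let ?r = "LEAST r. f (r # xs) = 0"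
    have "f (?r # xs) = 0" using ex[OF l] by (rule LeastI_ex)
    then have e0: "eval F (?r # xs) 0" using F l by (metis length_Cons)
    have "\<forall>k < ?r. \<exists>v. v > 0 \<and> eval F (k # xs) v"
    proof (intro allI impI)
      fix k assume "k < ?r"
      then have "f (k # xs) \<noteq> 0" by (rule not_less_Least)
      then show "\<exists>v. v > 0 \<and> eval F (k # xs) v" using F l by (intro exI[of _ "f (k # xs)"]) auto
    qed
    then show "eval (Mu F) xs ?r" using e0 by (intro ev_Mu) auto
  qed
qed

lemma rc_comp1: "rc 1 h \<Longrightarrow> rc n g \<Longrightarrow> rc n (\<lambda>xs. h [g xs])"
  using rc_comp[of "[g]" h n] by simp

lemma rc_comp2: "rc 2 h \<Longrightarrow> rc n g1 \<Longrightarrow> rc n g2 \<Longrightarrow> rc n (\<lambda>xs. h [g1 xs, g2 xs])"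
  using rc_comp[of "[g1, g2]" h n] by (simp add: numeral_2_eq_2)

lemma rc_comp4: "rc 4 h \<Longrightarrow> rc n g1 \<Longrightarrow> rc n g2 \<Longrightarrow> rc n g3 \<Longrightarrow> rc n g4 \<Longrightarrow>
   rc n (\<lambda>xs. h [g1 xs, g2 xs, g3 xs, g4 xs])"
  using rc_comp[of "[g1, g2, g3, g4]" h n] by (simp add: numeral_eq_Suc)

lemma rc_comp5: "rc 5 h \<Longrightarrow> rc n g1 \<Longrightarrow> rc n g2 \<Longrightarrow> rc n g3 \<Longrightarrow> rc n g4 \<Longrightarrow> rc n g5 \<Longrightarrow>
   rc n (\<lambda>xs. h [g1 xs, g2 xs, g3 xs, g4 xs, g5 xs])"
  using rc_comp[of "[g1, g2, g3, g4, g5]" h n] by (simp add: numeral_eq_Suc)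

lemma rc_cons: "rc (Suc n) H \<Longrightarrow> rc n g \<Longrightarrow> rc n (\<lambda>xs. H (g xs # xs))"
proof -
  assume H: "rc (Suc n) H" and g: "rc n g"
  let ?gs = "g # map (\<lambda>j xs. xs ! j) [0..<n]"
  have "rc n (\<lambda>xs. H (map (\<lambda>g. g xs) ?gs))"
    by (rule rc_comp) (use H g rc_proj in auto)
  then show ?thesis
  proof (rule rc_cong)
    fix xs :: "nat list" assume "length xs = n"
    then have "map (\<lambda>j. xs ! j) [0..<n] = xs" by (metis map_nth)
    then show "H (map (\<lambda>g. g xs) ?gs) = H (g xs # xs)" by (simp add: comp_def)
  qed
qed

lemma rc_shift: "rc (Suc n) H \<Longrightarrow> rc (Suc (Suc n)) (\<lambda>zs. H (hd zs # tl (tl zs)))"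
proof -
  assume H: "rc (Suc n) H"
  let ?gs = "map (\<lambda>j xs. xs ! j) (0 # map (\<lambda>j. j + 2) [0..<n])"
  have "rc (Suc (Suc n)) (\<lambda>xs. H (map (\<lambda>g. g xs) ?gs))"
    by (rule rc_comp) (use H rc_proj in auto)
  then show ?thesis
  proof (rule rc_cong)
    fix zs :: "nat list" assume "length zs = Suc (Suc n)"
    then obtain a b r where z: "zs = a # b # r" "length r = n" by (auto simp: length_Suc_conv)
    then have "map (\<lambda>j. r ! j) [0..<n] = r" by (metis map_nth)
    then show "H (map (\<lambda>g. g zs) ?gs) = H (hd zs # tl (tl zs))" using z by (simp add: comp_def)
  qed
qed

lemma rc_const: "rc n (\<lambda>_. c)"
proof (induction c)
  case 0 then show ?case by (rule rc_zero)
next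
  case (Suc c) then show ?case by (rule rc_succ)
qed

lemma len2: "length xs = 2 \<Longrightarrow> xs = [xs!0, xs!1]"
  by (cases xs; cases "tl xs") auto

lemma rc_add2: "rc 2 (\<lambda>xs. xs!0 + xs!1)"
proof -
  have "rc (Suc 1) (\<lambda>xs. rec_nat ((\<lambda>ys. ys!0) (tl xs)) (\<lambda>k r. (\<lambda>zs. Suc (zs!1)) (k # r # tl xs)) (hd xs))"
    by (rule rc_prim) (auto intro: rc_proj rc_succ)
  then show ?thesis
  proof (rule rc_cong2)
    show "Suc 1 = 2" by simp
  next
    fix xs :: "nat list" assume "length xs = 2"
    then obtain a b where x: "xs = [a,b]" by (metis len2)
    have "rec_nat b (\<lambda>k r. Suc r) a = a + b" by (induction a) auto
    then show "rec_nat ((\<lambda>ys. ys!0) (tl xs)) (\<lambda>k r. (\<lambda>zs. Suc (zs!1)) (k # r # tl xs)) (hd xs) = xs!0 + xs!1"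
      using x by simp
  qed
qed

lemma rc_pred1: "rc 1 (\<lambda>xs. xs!0 - 1)"
proof -
  have "rc (Suc 0) (\<lambda>xs. rec_nat ((\<lambda>ys. 0) (tl xs)) (\<lambda>k r. (\<lambda>zs. zs!0) (k # r # tl xs)) (hd xs))"
    by (rule rc_prim) (auto intro: rc_proj rc_zero)
  then show ?thesis
  proof (rule rc_cong2)
    show "Suc 0 = 1" by simp
  next
    fix xs :: "nat list" assume "length xs = 1"
    then obtain a where x: "xs = [a]" by (auto simp: length_Suc_conv)
    have "rec_nat 0 (\<lambda>k r. k) a = a - 1" by (cases a) auto
    then show "rec_nat ((\<lambda>ys. 0) (tl xs)) (\<lambda>k r. (\<lambda>zs. zs!0) (k # r # tl xs)) (hd xs) = xs!0 - 1"
      using x by simp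
  qed
qed

lemma rc_sub2: "rc 2 (\<lambda>xs. xs!1 - xs!0)"
proof -
  have g: "rc (Suc (Suc 1)) (\<lambda>zs. zs!1 - 1)"
    by (rule rc_cong[OF rc_comp1[OF rc_pred1 rc_proj[of 1 "Suc (Suc 1)"]]]) auto
  have "rc (Suc 1) (\<lambda>xs. rec_nat ((\<lambda>ys. ys!0) (tl xs)) (\<lambda>k r. (\<lambda>zs. zs!1 - 1) (k # r # tl xs)) (hd xs))"
    by (rule rc_prim[OF rc_proj g]) simp
  then show ?thesis
  proof (rule rc_cong2)
    show "Suc 1 = 2" by simp
  next
    fix xs :: "nat list" assume "length xs = 2"
    then obtain a b where x: "xs = [a,b]" by (metis len2)
    have "rec_nat b (\<lambda>k r. r - 1) a = b - a" by (induction a) auto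
    then show "rec_nat ((\<lambda>ys. ys!0) (tl xs)) (\<lambda>k r. (\<lambda>zs. zs!1 - 1) (k # r # tl xs)) (hd xs) = xs!1 - xs!0"
      using x by simp
  qed
qed

lemma rc_tri1: "rc 1 (\<lambda>xs. triangle (xs!0))"
proof -
  have g: "rc (Suc (Suc 0)) (\<lambda>zs. zs!1 + Suc (zs!0))"
    by (rule rc_cong[OF rc_comp2[OF rc_add2 rc_proj[of 1 "Suc (Suc 0)"] rc_succ[OF rc_proj[of 0 "Suc (Suc 0)"]]]]) auto
  have "rc (Suc 0) (\<lambda>xs. rec_nat ((\<lambda>ys. 0) (tl xs)) (\<lambda>k r. (\<lambda>zs. zs!1 + Suc (zs!0)) (k # r # tl xs)) (hd xs))"
    by (rule rc_prim[OF rc_zero g])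
  then show ?thesis
  proof (rule rc_cong2)
    show "Suc 0 = 1" by simp
  next
    fix xs :: "nat list" assume "length xs = 1"
    then obtain a where x: "xs = [a]" by (auto simp: length_Suc_conv)
    have "rec_nat 0 (\<lambda>k r. r + Suc k) a = triangle a" by (induction a) auto
    then show "rec_nat ((\<lambda>ys. 0) (tl xs)) (\<lambda>k r. (\<lambda>zs. zs!1 + Suc (zs!0)) (k # r # tl xs)) (hd xs) = triangle (xs!0)"
      using x by simp
  qed
qed

lemma rcI_add: "rc n g1 \<Longrightarrow> rc n g2 \<Longrightarrow> rc n (\<lambda>xs. g1 xs + g2 xs)"
  using rc_comp2[OF rc_add2] by simp

lemma rcI_sub: "rc n g1 \<Longrightarrow> rc n g2 \<Longrightarrow> rc n (\<lambda>xs. g1 xs - g2 xs)"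
  using rc_comp2[OF rc_sub2, of n g2 g1] by simp

lemma rcI_tri: "rc n g \<Longrightarrow> rc n (\<lambda>xs. triangle (g xs))"
  using rc_comp1[OF rc_tri1] by simp

lemma rcI_eq: "rc n g1 \<Longrightarrow> rc n g2 \<Longrightarrow> rc n (\<lambda>xs. of_bool (g1 xs = g2 xs))"
proof -
  assume "rc n g1" "rc n g2"
  then have "rc n (\<lambda>xs. (\<lambda>_. 1) xs - ((g1 xs - g2 xs) + (g2 xs - g1 xs)))"
    by (intro rcI_sub rcI_add rc_const)
  then show ?thesis by (rule rc_cong) auto
qed

lemma rcI_less: "rc n g1 \<Longrightarrow> rc n g2 \<Longrightarrow> rc n (\<lambda>xs. of_bool (g1 xs < g2 xs))"
proof -
  assume "rc n g1" "rc n g2"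
  then have "rc n (\<lambda>xs. (\<lambda>_. 1) xs - ((\<lambda>_. 1) xs - (g2 xs - g1 xs)))"
    by (intro rcI_sub rcI_add rc_const)
  then show ?thesis by (rule rc_cong) auto
qed

lemma rcI_not: "rc n (\<lambda>xs. of_bool (A xs)) \<Longrightarrow> rc n (\<lambda>xs. of_bool (\<not> A xs))"
proof -
  assume "rc n (\<lambda>xs. of_bool (A xs))"
  then have "rc n (\<lambda>xs. (\<lambda>_. 1) xs - of_bool (A xs))"
    by (intro rcI_sub rc_const)
  then show ?thesis by (rule rc_cong) auto
qed

lemma rcI_conj: "rc n (\<lambda>xs. of_bool (A xs)) \<Longrightarrow> rc n (\<lambda>xs. of_bool (B xs)) \<Longrightarrow> rc n (\<lambda>xs. of_bool (A xs \<and> B xs))"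
proof -
  assume "rc n (\<lambda>xs. of_bool (A xs))" "rc n (\<lambda>xs. of_bool (B xs))"
  then have "rc n (\<lambda>xs. (\<lambda>_. 1) xs - (((\<lambda>_. 1) xs - of_bool (A xs)) + ((\<lambda>_. 1) xs - of_bool (B xs))))"
    by (intro rcI_sub rcI_add rc_const)
  then show ?thesis by (rule rc_cong) auto
qed

lemma rcI_disj: "rc n (\<lambda>xs. of_bool (A xs)) \<Longrightarrow> rc n (\<lambda>xs. of_bool (B xs)) \<Longrightarrow> rc n (\<lambda>xs. of_bool (A xs \<or> B xs))"
proof -
  assume "rc n (\<lambda>xs. of_bool (A xs))" "rc n (\<lambda>xs. of_bool (B xs))"
  then have "rc n (\<lambda>xs. (\<lambda>_. 1) xs - ((\<lambda>_. 1) xs - (of_bool (A xs) + of_bool (B xs))))"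
    by (intro rcI_sub rcI_add rc_const)
  then show ?thesis by (rule rc_cong) auto
qed

lemma rcI_imp: "rc n (\<lambda>xs. of_bool (A xs)) \<Longrightarrow> rc n (\<lambda>xs. of_bool (B xs)) \<Longrightarrow> rc n (\<lambda>xs. of_bool (A xs \<longrightarrow> B xs))"
proof -
  assume "rc n (\<lambda>xs. of_bool (A xs))" "rc n (\<lambda>xs. of_bool (B xs))"
  then have "rc n (\<lambda>xs. of_bool (\<not> A xs \<or> B xs))" by (intro rcI_disj rcI_not)
  then show ?thesis by (rule rc_cong) auto
qed

lemma or01: "(1::nat) - (1 - (of_bool A + of_bool B)) = of_bool (A \<or> B)"
  by (cases A; cases B) auto

lemma rcI_bex:
  assumes P: "rc (Suc n) (\<lambda>ys. of_bool (P (hd ys) (tl ys)))" and g: "rc n g"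
  shows "rc n (\<lambda>xs. of_bool (\<exists>i<g xs. P i xs))"
proof -
  let ?Q = "\<lambda>ys. of_bool (P (hd ys) (tl ys)) :: nat"
  have s: "rc (Suc (Suc n)) (\<lambda>zs. ?Q (hd zs # tl (tl zs)))" using rc_shift[OF P] .
  have G: "rc (Suc (Suc n)) (\<lambda>zs. (\<lambda>_. 1) zs - ((\<lambda>_. 1) zs - (zs!1 + ?Q (hd zs # tl (tl zs)))))"
    by (intro rcI_sub rcI_add rc_const rc_proj s) simp
  have "rc (Suc n) (\<lambda>xs. rec_nat ((\<lambda>_. 0) (tl xs))
      (\<lambda>k r. (\<lambda>zs. (\<lambda>_. 1) zs - ((\<lambda>_. 1) zs - (zs!1 + ?Q (hd zs # tl (tl zs))))) (k # r # tl xs)) (hd xs))"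
    by (rule rc_prim[OF rc_zero G])
  then have H: "rc (Suc n) (\<lambda>xs. of_bool (\<exists>i<hd xs. P i (tl xs)))"
  proof (rule rc_cong)
    fix xs :: "nat list"
    have "rec_nat (0::nat) (\<lambda>k r. 1 - (1 - (r + of_bool (P k (tl xs))))) m = of_bool (\<exists>i<m. P i (tl xs))" for m
      by (induction m) (auto simp: less_Suc_eq)
    then show "rec_nat ((\<lambda>_. 0) (tl xs))
      (\<lambda>k r. (\<lambda>zs. (\<lambda>_. 1) zs - ((\<lambda>_. 1) zs - (zs!1 + ?Q (hd zs # tl (tl zs))))) (k # r # tl xs)) (hd xs)
      = of_bool (\<exists>i<hd xs. P i (tl xs))" by simp
  qed
  show ?thesis using rc_cons[OF H g] by simp
qed

lemma rcI_ball:
  assumes P: "rc (Suc n) (\<lambda>ys. of_bool (P (hd ys) (tl ys)))" and g: "rc n g"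
  shows "rc n (\<lambda>xs. of_bool (\<forall>i<g xs. P i xs))"
proof -
  have "rc n (\<lambda>xs. of_bool (\<not> (\<exists>i<g xs. \<not> P i xs)))"
    by (intro rcI_not rcI_bex[OF _ g] rcI_not P)
  then show ?thesis by (rule rc_cong) auto
qed

lemma rc_least:
  assumes P: "rc (Suc n) (\<lambda>ys. of_bool (P (hd ys) (tl ys)))" and ex: "\<And>xs. length xs = n \<Longrightarrow> \<exists>r. P r xs"
  shows "rc n (\<lambda>xs. LEAST r. P r xs)"
proof -
  have "rc (Suc n) (\<lambda>ys. of_bool (\<not> P (hd ys) (tl ys)))" using rcI_not[OF P] .
  then have "rc n (\<lambda>xs. LEAST r. (\<lambda>ys. of_bool (\<not> P (hd ys) (tl ys)) :: nat) (r # xs) = 0)"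
    by (rule rc_mu) (use ex in auto)
  then show ?thesis by (rule rc_cong) simp
qed

lemma hdtl1: "Suc 0 < length xs \<Longrightarrow> xs ! Suc 0 = hd (tl xs)"
  by (cases xs; cases "tl xs") auto
lemma hdtl2: "Suc (Suc 0) < length xs \<Longrightarrow> xs ! Suc (Suc 0) = hd (tl (tl xs))"
  by (cases xs; cases "tl xs"; cases "tl (tl xs)") auto
lemma hdtl3: "Suc (Suc (Suc 0)) < length xs \<Longrightarrow> xs ! Suc (Suc (Suc 0)) = hd (tl (tl (tl xs)))"
  by (cases xs; cases "tl xs"; cases "tl (tl xs)"; cases "tl (tl (tl xs))") auto

lemma rcI_hd: "0 < n \<Longrightarrow> rc n (\<lambda>xs. hd xs)"
  by (rule rc_cong[OF rc_proj[of 0 n]]) (auto simp: hd_conv_nth)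

lemma rcI_tlnth: "Suc i < n \<Longrightarrow> rc n (\<lambda>xs. tl xs ! i)"
  by (rule rc_cong[OF rc_proj[of "Suc i" n]]) (auto simp: nth_tl)

lemma rcI_tlhd: "Suc 0 < n \<Longrightarrow> rc n (\<lambda>xs. hd (tl xs))"
  by (rule rc_cong[OF rc_proj[of "Suc 0" n]]) (auto simp: hdtl1)

lemma rcI_tl2nth: "Suc (Suc i) < n \<Longrightarrow> rc n (\<lambda>xs. tl (tl xs) ! i)"
  by (rule rc_cong[OF rc_proj[of "Suc (Suc i)" n]]) (auto simp: nth_tl)

lemma rcI_tl2hd: "Suc (Suc 0) < n \<Longrightarrow> rc n (\<lambda>xs. hd (tl (tl xs)))"
  by (rule rc_cong[OF rc_proj[of "Suc (Suc 0)" n]]) (auto simp: hdtl2)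

lemma rcI_tl3nth: "Suc (Suc (Suc i)) < n \<Longrightarrow> rc n (\<lambda>xs. tl (tl (tl xs)) ! i)"
  by (rule rc_cong[OF rc_proj[of "Suc (Suc (Suc i))" n]]) (auto simp: nth_tl)

lemma rcI_tl3hd: "Suc (Suc (Suc 0)) < n \<Longrightarrow> rc n (\<lambda>xs. hd (tl (tl (tl xs))))"
  by (rule rc_cong[OF rc_proj[of "Suc (Suc (Suc 0))" n]]) (auto simp: hdtl3)

lemma rcI_tl4nth: "Suc (Suc (Suc (Suc i))) < n \<Longrightarrow> rc n (\<lambda>xs. tl (tl (tl (tl xs))) ! i)"
  by (rule rc_cong[OF rc_proj[of "Suc (Suc (Suc (Suc i)))" n]]) (auto simp: nth_tl)

lemma rcI_succ: "rc n g \<Longrightarrow> rc n (\<lambda>xs. Suc (g xs))" by (rule rc_succ)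

lemmas rc_basic = rcI_add rcI_sub rcI_tri rcI_eq rcI_less rcI_not rcI_conj rcI_disj rcI_imp
  rcI_bex rcI_ball rcI_hd rcI_tlnth rcI_tlhd rcI_tl2nth rcI_tl2hd rcI_tl3nth rcI_tl3hd rcI_tl4nth
  rcI_succ rc_proj rc_const

definition pz :: "nat \<Rightarrow> nat" where "pz n = (LEAST z. n < triangle (Suc z))"
definition pfst :: "nat \<Rightarrow> nat" where "pfst n = n - triangle (pz n)"
definition psnd :: "nat \<Rightarrow> nat" where "psnd n = pz n - pfst n"

lemma triangle_mono: "m \<le> k \<Longrightarrow> triangle m \<le> triangle k"
proof (induction k rule: dec_induct)
  case base then show ?case by simp
next
  case (step k) then show ?case by simp
qed

lemma prod_decode_alt: "prod_decode n = (pfst n, psnd n)"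
proof -
  obtain a b where ab: "prod_decode n = (a,b)" by force
  then have n: "n = triangle (a+b) + a" using prod_decode_inverse[of n] by (simp add: prod_encode_def)
  have "pz n = a + b" unfolding pz_def
  proof (rule Least_equality)
    show "n < triangle (Suc (a + b))" using n by simp
  next
    fix y assume y: "n < triangle (Suc y)"
    show "a + b \<le> y"
    proof (rule ccontr)
      assume "\<not> a + b \<le> y"
      then have "triangle (Suc y) \<le> triangle (a+b)" by (intro triangle_mono) simp
      then show False using y n by simp
    qed
  qed
  then show ?thesis using ab n by (simp add: pfst_def psnd_def)
qed

lemma rc_pz1: "rc 1 (\<lambda>xs. pz (xs!0))"
  unfolding pz_def
proof (rule rc_least)
  show "rc (Suc 1) (\<lambda>ys. of_bool (tl ys ! 0 < triangle (Suc (hd ys))))"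
    by (intro rc_basic) auto
next
  fix xs :: "nat list"
  have "xs!0 < triangle (Suc (xs!0))" by simp
  then show "\<exists>r. xs!0 < triangle (Suc r)" by blast
qed

lemma rcI_pz: "rc n g \<Longrightarrow> rc n (\<lambda>xs. pz (g xs))"
  using rc_comp1[OF rc_pz1] by simp

lemma rcI_pfst: "rc n g \<Longrightarrow> rc n (\<lambda>xs. pfst (g xs))"
  unfolding pfst_def by (intro rcI_sub rcI_tri rcI_pz)

lemma rcI_psnd: "rc n g \<Longrightarrow> rc n (\<lambda>xs. psnd (g xs))"
  unfolding psnd_def by (intro rcI_sub rcI_tri rcI_pz rcI_pfst)

definition tlc :: "nat \<Rightarrow> nat" where "tlc c = psnd (c - 1)"
definition hdc :: "nat \<Rightarrow> nat" where "hdc c = pfst (c - 1)"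
definition tln :: "nat \<Rightarrow> nat \<Rightarrow> nat" where "tln k c = (tlc ^^ k) c"
definition nthc :: "nat \<Rightarrow> nat \<Rightarrow> nat" where "nthc i c = hdc (tln i c)"
definition lenc :: "nat \<Rightarrow> nat" where "lenc c = (LEAST k. tln k c = 0)"

lemma rc_tln2: "rc 2 (\<lambda>xs. tln (xs!0) (xs!1))"
proof -
  have g: "rc (Suc (Suc 1)) (\<lambda>zs. tlc (zs!1))"
    unfolding tlc_def by (intro rcI_psnd rcI_sub rc_proj rc_const) simp
  have "rc (Suc 1) (\<lambda>xs. rec_nat ((\<lambda>ys. ys!0) (tl xs)) (\<lambda>k r. (\<lambda>zs. tlc (zs!1)) (k # r # tl xs)) (hd xs))"
    by (rule rc_prim[OF rc_proj g]) simp
  then show ?thesis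
  proof (rule rc_cong2)
    show "Suc 1 = 2" by simp
  next
    fix xs :: "nat list" assume "length xs = 2"
    then obtain a b where x: "xs = [a,b]" by (metis len2)
    have "rec_nat b (\<lambda>k r. tlc r) a = tln a b" by (induction a) (auto simp: tln_def)
    then show "rec_nat ((\<lambda>ys. ys!0) (tl xs)) (\<lambda>k r. (\<lambda>zs. tlc (zs!1)) (k # r # tl xs)) (hd xs) = tln (xs!0) (xs!1)"
      using x by simp
  qed
qed

lemma rcI_tln: "rc n g1 \<Longrightarrow> rc n g2 \<Longrightarrow> rc n (\<lambda>xs. tln (g1 xs) (g2 xs))"
  using rc_comp2[OF rc_tln2] by simp

lemma rcI_nthc: "rc n g1 \<Longrightarrow> rc n g2 \<Longrightarrow> rc n (\<lambda>xs. nthc (g1 xs) (g2 xs))"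
  unfolding nthc_def hdc_def by (intro rcI_pfst rcI_sub rcI_tln rc_const)

lemma pd0: "prod_decode 0 = (0,0)"
  by (simp add: prod_decode_def prod_decode_aux.simps)

lemma ld_tlc: "list_decode (tlc c) = tl (list_decode c)"
proof (cases c)
  case 0 then show ?thesis using pd0 prod_decode_alt[of 0] by (simp add: tlc_def)
next
  case (Suc m) then show ?thesis using prod_decode_alt[of m] by (simp add: tlc_def)
qed

lemma hdc_ok: "c \<noteq> 0 \<Longrightarrow> hdc c = hd (list_decode c)"
  by (cases c) (auto simp: hdc_def prod_decode_alt)

lemma ld_tln: "list_decode (tln k c) = drop k (list_decode c)"
  by (induction k) (auto simp: tln_def ld_tlc drop_Suc tl_drop)

lemma ld_zero: "list_decode c = [] \<longleftrightarrow> c = 0"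
  by (metis list_decode.simps(1) list_decode_inverse list_encode.simps(1))

lemma nthc_ok: "i < length (list_decode c) \<Longrightarrow> nthc i c = list_decode c ! i"
proof -
  assume i: "i < length (list_decode c)"
  have "list_decode (tln i c) = drop i (list_decode c)" by (rule ld_tln)
  moreover have "drop i (list_decode c) \<noteq> []" using i by simp
  ultimately have "tln i c \<noteq> 0" using ld_zero by metis
  then show ?thesis unfolding nthc_def using hdc_ok ld_tln i by (simp add: hd_drop_conv_nth)
qed

lemma tln_zero: "tln k c = 0 \<longleftrightarrow> length (list_decode c) \<le> k"
  using ld_zero[of "tln k c"] ld_tln by simp

lemma lenc_ok: "lenc c = length (list_decode c)"
  unfolding lenc_def tln_zero by (rule Least_equality) auto

lemma rc_lenc1: "rc 1 (\<lambda>xs. lenc (xs!0))"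
  unfolding lenc_def
proof (rule rc_least)
  show "rc (Suc 1) (\<lambda>ys. of_bool (tln (hd ys) (tl ys ! 0) = 0))"
    by (intro rc_basic rcI_tln) auto
next
  fix xs :: "nat list"
  show "\<exists>r. tln r (xs!0) = 0" using tln_zero by blast
qed

lemma rcI_lenc: "rc n g \<Longrightarrow> rc n (\<lambda>xs. lenc (g xs))"
  using rc_comp1[OF rc_lenc1] by simp

lemma nthc_enc: "i < length xs \<Longrightarrow> nthc i (list_encode xs) = xs ! i"
  using nthc_ok[of i "list_encode xs"] by simp

lemma lenc_enc: "lenc (list_encode xs) = length xs"
  using lenc_ok by simp

lemma pfst_enc: "pfst (prod_encode (a,b)) = a"
  using prod_decode_alt[of "prod_encode (a,b)"] by simp

lemma psnd_enc: "psnd (prod_encode (a,b)) = b"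
  using prod_decode_alt[of "prod_encode (a,b)"] by simp

lemmas rc_all = rc_basic rcI_pfst rcI_psnd rcI_nthc rcI_lenc rcI_tln

definition Mrel :: "nat \<Rightarrow> nat \<Rightarrow> nat \<Rightarrow> nat \<Rightarrow> bool" where
  "Mrel u v xc yc \<longleftrightarrow> (\<exists>i<lenc xc. \<exists>j<lenc xc. nthc i xc = nthc j xc \<and> nthc i yc = u \<and> nthc j yc = v)"
definition memc :: "nat \<Rightarrow> nat \<Rightarrow> bool" where
  "memc u c \<longleftrightarrow> (\<exists>s<lenc c. nthc s c = u)"
definition pathc :: "nat \<Rightarrow> nat \<Rightarrow> nat \<Rightarrow> nat \<Rightarrow> nat \<Rightarrow> bool" where
  "pathc a b xc yc c \<longleftrightarrow> 0 < lenc c \<and> nthc 0 c = a \<and> nthc (lenc c - 1) c = b \<and>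
     (\<forall>s<lenc c - 1. Mrel (nthc s c) (nthc (Suc s) c) xc yc)"
definition setc :: "nat \<Rightarrow> nat \<Rightarrow> nat \<Rightarrow> nat \<Rightarrow> nat \<Rightarrow> bool" where
  "setc a b xc yc c \<longleftrightarrow> memc a c \<and> \<not> memc b c \<and>
     (\<forall>s<lenc c. \<forall>i<lenc xc. \<forall>j<lenc xc. nthc i xc = nthc j xc \<and> nthc i yc = nthc s c \<longrightarrow> memc (nthc j yc) c)"
definition conn :: "nat \<Rightarrow> nat \<Rightarrow> nat \<Rightarrow> nat \<Rightarrow> bool" where
  "conn a b xc yc \<longleftrightarrow> pathc a b xc yc (LEAST c. pathc a b xc yc c \<or> setc a b xc yc c)"
definition sub1 :: "nat \<Rightarrow> nat \<Rightarrow> nat \<Rightarrow> nat \<Rightarrow> bool" where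
  "sub1 A B xc yc \<longleftrightarrow> (\<forall>i<lenc A. \<exists>k<lenc xc. nthc i A = nthc k xc \<and> nthc i B = nthc k yc)"
definition sub3 :: "nat \<Rightarrow> nat \<Rightarrow> nat \<Rightarrow> nat \<Rightarrow> bool" where
  "sub3 A B xc yc \<longleftrightarrow> (\<forall>i<lenc A. conn (nthc i A) (nthc i B) xc yc)"
definition Pred :: "nat \<Rightarrow> bool" where
  "Pred n \<longleftrightarrow> (\<exists>j<lenc (pfst n).
      sub1 (pfst (nthc j (pfst n))) (psnd (nthc j (pfst n))) (pfst (psnd n)) (psnd (psnd n))
    \<or> sub1 (pfst (nthc j (pfst n))) (psnd (nthc j (pfst n))) (psnd (psnd n)) (pfst (psnd n))
    \<or> sub3 (pfst (nthc j (pfst n))) (psnd (nthc j (pfst n))) (pfst (psnd n)) (psnd (psnd n))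
    \<or> sub3 (pfst (nthc j (pfst n))) (psnd (nthc j (pfst n))) (psnd (psnd n)) (pfst (psnd n)))"

section \<open>Computability\<close>

lemma rc_Mrel4: "rc 4 (\<lambda>xs. of_bool (Mrel (xs!0) (xs!1) (xs!2) (xs!3)))"
  unfolding Mrel_def by (intro rc_all) auto

lemma rcI_Mrel: "rc n g1 \<Longrightarrow> rc n g2 \<Longrightarrow> rc n g3 \<Longrightarrow> rc n g4 \<Longrightarrow>
  rc n (\<lambda>xs. of_bool (Mrel (g1 xs) (g2 xs) (g3 xs) (g4 xs)))"
  using rc_comp4[OF rc_Mrel4] by simp

lemma rc_memc2: "rc 2 (\<lambda>xs. of_bool (memc (xs!0) (xs!1)))"
  unfolding memc_def by (intro rc_all) auto

lemma rcI_memc: "rc n g1 \<Longrightarrow> rc n g2 \<Longrightarrow> rc n (\<lambda>xs. of_bool (memc (g1 xs) (g2 xs)))"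
  using rc_comp2[OF rc_memc2] by simp

lemma rc_pathc5: "rc 5 (\<lambda>xs. of_bool (pathc (xs!0) (xs!1) (xs!2) (xs!3) (xs!4)))"
  unfolding pathc_def by (intro rc_all rcI_Mrel) auto

lemma rcI_pathc: "rc n g1 \<Longrightarrow> rc n g2 \<Longrightarrow> rc n g3 \<Longrightarrow> rc n g4 \<Longrightarrow> rc n g5 \<Longrightarrow>
  rc n (\<lambda>xs. of_bool (pathc (g1 xs) (g2 xs) (g3 xs) (g4 xs) (g5 xs)))"
  using rc_comp5[OF rc_pathc5] by simp

lemma rc_setc5: "rc 5 (\<lambda>xs. of_bool (setc (xs!0) (xs!1) (xs!2) (xs!3) (xs!4)))"
  unfolding setc_def by (intro rc_all rcI_memc) auto

lemma rcI_setc: "rc n g1 \<Longrightarrow> rc n g2 \<Longrightarrow> rc n g3 \<Longrightarrow> rc n g4 \<Longrightarrow> rc n g5 \<Longrightarrow>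
  rc n (\<lambda>xs. of_bool (setc (g1 xs) (g2 xs) (g3 xs) (g4 xs) (g5 xs)))"
  using rc_comp5[OF rc_setc5] by simp

section \<open>Certificates\<close>

definition Rm :: "nat \<Rightarrow> nat \<Rightarrow> (nat \<times> nat) set" where
  "Rm xc yc = {(u,v). Mrel u v xc yc}"

lemma memc_ok: "memc u c \<longleftrightarrow> u \<in> set (list_decode c)"
  unfolding memc_def lenc_ok by (auto simp: nthc_ok in_set_conv_nth)

lemma pathc_ok: "pathc a b xc yc c \<Longrightarrow> (a,b) \<in> (Rm xc yc)\<^sup>*"
proof -
  assume p: "pathc a b xc yc c"
  let ?L = "list_decode c"
  have p': "0 < lenc c" "nthc 0 c = a" "nthc (lenc c - 1) c = b"
    "\<forall>s<lenc c - 1. Mrel (nthc s c) (nthc (Suc s) c) xc yc" using p unfolding pathc_def by auto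
  have l0: "0 < length ?L" using p'(1) by (simp add: lenc_ok)
  have l: "0 < length ?L" "?L!0 = a" "?L!(length ?L - 1) = b"
    using l0 nthc_ok[of 0 c] nthc_ok[of "length ?L - 1" c] p'(2,3) by (simp_all add: lenc_ok)
  have st: "\<forall>s<length ?L - 1. (?L!s, ?L!Suc s) \<in> Rm xc yc"
  proof (intro allI impI)
    fix s assume s: "s < length ?L - 1"
    then have "Mrel (nthc s c) (nthc (Suc s) c) xc yc" using p'(4) by (simp add: lenc_ok)
    moreover have "nthc s c = ?L!s" "nthc (Suc s) c = ?L!Suc s" using s nthc_ok by auto
    ultimately show "(?L!s, ?L!Suc s) \<in> Rm xc yc" unfolding Rm_def by simp
  qed
  have "\<forall>s<length ?L. (a, ?L!s) \<in> (Rm xc yc)\<^sup>*"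
  proof (intro allI impI)
    fix s assume "s < length ?L"
    then show "(a, ?L!s) \<in> (Rm xc yc)\<^sup>*"
    proof (induction s)
      case 0 then show ?case using l by simp
    next
      case (Suc s)
      then have "(a, ?L!s) \<in> (Rm xc yc)\<^sup>*" by simp
      moreover have "(?L!s, ?L!Suc s) \<in> Rm xc yc" using st Suc.prems by simp
      ultimately show ?case by (rule rtrancl_into_rtrancl)
    qed
  qed
  moreover have "length ?L - 1 < length ?L" using l0 by simp
  ultimately show ?thesis using l(3) by metis
qed

lemma setc_ok: "setc a b xc yc c \<Longrightarrow> (a,b) \<notin> (Rm xc yc)\<^sup>*"
proof
  assume s: "setc a b xc yc c" and r: "(a,b) \<in> (Rm xc yc)\<^sup>*"
  let ?L = "list_decode c"
  have sc: "memc a c \<and> \<not> memc b c \<and>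
     (\<forall>s<lenc c. \<forall>i<lenc xc. \<forall>j<lenc xc. nthc i xc = nthc j xc \<and> nthc i yc = nthc s c \<longrightarrow> memc (nthc j yc) c)"
    using s unfolding setc_def .
  have a: "a \<in> set ?L" using sc[THEN conjunct1] unfolding memc_ok .
  have b: "b \<notin> set ?L" using sc[THEN conjunct2, THEN conjunct1] unfolding memc_ok .
  note cl0 = sc[THEN conjunct2, THEN conjunct2]
  have cl: "v \<in> set ?L" if "u \<in> set ?L" "(u,v) \<in> Rm xc yc" for u v
  proof -
    have "\<exists>t<length ?L. ?L!t = u" using that(1) by (simp only: in_set_conv_nth)
    then obtain t where t: "t < length ?L" "?L!t = u" by blast
    from that(2) have "Mrel u v xc yc" unfolding Rm_def by simp
    then obtain i j where ij: "i < lenc xc" "j < lenc xc" "nthc i xc = nthc j xc" "nthc i yc = u" "nthc j yc = v"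
      unfolding Mrel_def by blast
    have t1: "t < lenc c" using t(1) by (simp only: lenc_ok)
    have t2: "nthc t c = u" using nthc_ok[OF t(1)] t(2) by simp
    have "memc (nthc j yc) c"
      by (rule cl0[rule_format, OF t1 ij(1) ij(2)]) (simp only: ij(3) ij(4) t2)
    then have "nthc j yc \<in> set ?L" unfolding memc_ok .
    then show ?thesis using ij(5) by simp
  qed
  have "(a,b) \<in> (Rm xc yc)\<^sup>* \<Longrightarrow> b \<in> set ?L"
  proof (induction rule: rtrancl_induct)
    case base then show ?case using a by simp
  next
    case (step y z) then show ?case using cl[of y z] by simp
  qed
  then show False using r b by simp
qed

lemma path_exists: "(a,b) \<in> R\<^sup>* \<Longrightarrow> \<exists>L. L \<noteq> [] \<and> L!0 = a \<and> L!(length L - 1) = b \<and> (\<forall>s<length L - 1. (L!s, L!Suc s) \<in> R)"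
proof (induction rule: rtrancl_induct)
  case base then show ?case by (intro exI[of _ "[a]"]) auto
next
  case (step y z)
  then obtain L where L: "L \<noteq> []" "L!0 = a" "L!(length L - 1) = y" "\<forall>s<length L - 1. (L!s, L!Suc s) \<in> R" by blast
  have "\<forall>s<length (L @ [z]) - 1. ((L @ [z])!s, (L @ [z])!Suc s) \<in> R"
  proof (intro allI impI)
    fix s assume s: "s < length (L @ [z]) - 1"
    show "((L @ [z])!s, (L @ [z])!Suc s) \<in> R"
    proof (cases "s < length L - 1")
      case True
      then have "Suc s < length L" "s < length L" by auto
      then show ?thesis using L(4) True by (simp add: nth_append)
    next
      case False then have "s = length L - 1" using s by simp
      then show ?thesis using L(1,3) step(2) by (simp add: nth_append)
    qed
  qed
  then show ?case using L by (intro exI[of _ "L @ [z]"]) (auto simp: nth_append)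
qed

lemma Rm_range: "Rm xc yc \<subseteq> UNIV \<times> ((\<lambda>j. nthc j yc) ` {..<lenc xc})"
  unfolding Rm_def Mrel_def by auto

lemma cert_exists: "\<exists>c. pathc a b xc yc c \<or> setc a b xc yc c"
proof (cases "(a,b) \<in> (Rm xc yc)\<^sup>*")
  case True
  then obtain L where L: "L \<noteq> []" "L!0 = a" "L!(length L - 1) = b" "\<forall>s<length L - 1. (L!s, L!Suc s) \<in> Rm xc yc"
    using path_exists[OF True] by blast
  have ln: "lenc (list_encode L) = length L" by (rule lenc_enc)
  have p4: "\<forall>s<lenc (list_encode L) - 1. Mrel (nthc s (list_encode L)) (nthc (Suc s) (list_encode L)) xc yc"
  proof (intro allI impI)
    fix s assume "s < lenc (list_encode L) - 1"
    then have s: "s < length L - 1" using ln by simp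
    then have "(L!s, L!Suc s) \<in> Rm xc yc" using L(4) by simp
    then have "Mrel (L!s) (L!Suc s) xc yc" unfolding Rm_def by simp
    moreover have "nthc s (list_encode L) = L!s" "nthc (Suc s) (list_encode L) = L!Suc s"
      using s nthc_enc[of s L] nthc_enc[of "Suc s" L] by auto
    ultimately show "Mrel (nthc s (list_encode L)) (nthc (Suc s) (list_encode L)) xc yc" by simp
  qed
  have "0 < length L" using L(1) by simp
  then have "pathc a b xc yc (list_encode L)"
    unfolding pathc_def using ln p4 L(2,3) nthc_enc[of 0 L] nthc_enc[of "length L - 1" L] by simp
  then show ?thesis by blast
next
  case False
  let ?S = "{v. (a,v) \<in> (Rm xc yc)\<^sup>*}"
  have "?S \<subseteq> insert a ((\<lambda>j. nthc j yc) ` {..<lenc xc})"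
  proof
    fix v assume "v \<in> ?S"
    then have "(a,v) \<in> (Rm xc yc)\<^sup>*" by simp
    then show "v \<in> insert a ((\<lambda>j. nthc j yc) ` {..<lenc xc})"
    proof (cases rule: rtranclE)
      case (step y)
      then have "(y,v) \<in> Rm xc yc" by simp
      then have "(y,v) \<in> UNIV \<times> ((\<lambda>j. nthc j yc) ` {..<lenc xc})" by (rule subsetD[OF Rm_range])
      then show ?thesis by simp
    qed simp
  qed
  then have fin: "finite ?S" by (rule finite_subset) simp
  define L where "L = sorted_list_of_set ?S"
  have sL: "set L = ?S" using fin unfolding L_def by simp
  have "setc a b xc yc (list_encode L)"
    unfolding setc_def memc_ok
  proof (intro conjI allI impI)
    show "a \<in> set (list_decode (list_encode L))" using sL by simp
    show "b \<notin> set (list_decode (list_encode L))" using sL False by simp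
  next
    fix s i j assume s: "s < lenc (list_encode L)" and i: "i < lenc xc" and j: "j < lenc xc"
      and e: "nthc i xc = nthc j xc \<and> nthc i yc = nthc s (list_encode L)"
    have sl: "s < length L" using s by (simp add: lenc_enc)
    have "L!s \<in> set L" using sl by (rule nth_mem)
    then have "L!s \<in> ?S" using sL by simp
    moreover have "nthc s (list_encode L) = L!s" using sl by (rule nthc_enc)
    then have "Mrel (L!s) (nthc j yc) xc yc" unfolding Mrel_def using i j e by auto
    then have "(L!s, nthc j yc) \<in> Rm xc yc" unfolding Rm_def by simp
    ultimately have "nthc j yc \<in> ?S" by (simp add: rtrancl_into_rtrancl)
    then show "nthc j yc \<in> set (list_decode (list_encode L))" using sL by simp
  qed
  then show ?thesis by blast
qed

lemma conn_ok: "conn a b xc yc \<longleftrightarrow> (a,b) \<in> (Rm xc yc)\<^sup>*"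
proof -
  let ?c = "LEAST c. pathc a b xc yc c \<or> setc a b xc yc c"
  have "pathc a b xc yc ?c \<or> setc a b xc yc ?c" using cert_exists by (rule LeastI_ex)
  then show ?thesis unfolding conn_def using pathc_ok setc_ok by blast
qed

lemma rc_conn4: "rc 4 (\<lambda>xs. of_bool (conn (xs!0) (xs!1) (xs!2) (xs!3)))"
proof -
  have L: "rc 4 (\<lambda>xs. LEAST c. pathc (xs!0) (xs!1) (xs!2) (xs!3) c \<or> setc (xs!0) (xs!1) (xs!2) (xs!3) c)"
  proof (rule rc_least)
    show "rc (Suc 4) (\<lambda>ys. of_bool (pathc (tl ys!0) (tl ys!1) (tl ys!2) (tl ys!3) (hd ys) \<or> setc (tl ys!0) (tl ys!1) (tl ys!2) (tl ys!3) (hd ys)))"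
      by (intro rc_all rcI_pathc rcI_setc) auto
  next
    fix xs :: "nat list"
    show "\<exists>r. pathc (xs!0) (xs!1) (xs!2) (xs!3) r \<or> setc (xs!0) (xs!1) (xs!2) (xs!3) r" by (rule cert_exists)
  qed
  show ?thesis unfolding conn_def by (intro rcI_pathc L rc_proj) auto
qed

lemma rcI_conn: "rc n g1 \<Longrightarrow> rc n g2 \<Longrightarrow> rc n g3 \<Longrightarrow> rc n g4 \<Longrightarrow>
  rc n (\<lambda>xs. of_bool (conn (g1 xs) (g2 xs) (g3 xs) (g4 xs)))"
  using rc_comp4[OF rc_conn4] by simp

lemma rc_sub1_4: "rc 4 (\<lambda>xs. of_bool (sub1 (xs!0) (xs!1) (xs!2) (xs!3)))"
  unfolding sub1_def by (intro rc_all) auto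

lemma rcI_sub1: "rc n g1 \<Longrightarrow> rc n g2 \<Longrightarrow> rc n g3 \<Longrightarrow> rc n g4 \<Longrightarrow>
  rc n (\<lambda>xs. of_bool (sub1 (g1 xs) (g2 xs) (g3 xs) (g4 xs)))"
  using rc_comp4[OF rc_sub1_4] by simp

lemma rc_sub3_4: "rc 4 (\<lambda>xs. of_bool (sub3 (xs!0) (xs!1) (xs!2) (xs!3)))"
  unfolding sub3_def by (intro rc_all rcI_conn) auto

lemma rcI_sub3: "rc n g1 \<Longrightarrow> rc n g2 \<Longrightarrow> rc n g3 \<Longrightarrow> rc n g4 \<Longrightarrow>
  rc n (\<lambda>xs. of_bool (sub3 (g1 xs) (g2 xs) (g3 xs) (g4 xs)))"
  using rc_comp4[OF rc_sub3_4] by simp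

lemma rc_Pred: "rc 1 (\<lambda>xs. of_bool (Pred (xs!0)))"
  unfolding Pred_def by (intro rc_all rcI_sub1 rcI_sub3) auto

lemma Rm_M:
  assumes l: "length x = length y"
  shows "Rm (list_encode x) (list_encode y) = M (set (zip x y))"
proof (intro set_eqI iffI)
  fix p assume "p \<in> Rm (list_encode x) (list_encode y)"
  then obtain u v where p: "p = (u,v)" and "Mrel u v (list_encode x) (list_encode y)" unfolding Rm_def by blast
  then obtain i j where ij: "i < length x" "j < length x" "x!i = x!j" "y!i = u" "y!j = v"
    unfolding Mrel_def using l by (auto simp: lenc_enc nthc_enc)
  have "(x!i, u) \<in> set (zip x y)" "(x!i, v) \<in> set (zip x y)" using ij l by (auto simp: in_set_zip)
  then show "p \<in> M (set (zip x y))" unfolding M_def p by blast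
next
  fix p assume "p \<in> M (set (zip x y))"
  then obtain u v z where p: "p = (u,v)" and zu: "(z,u) \<in> set (zip x y)" and zv: "(z,v) \<in> set (zip x y)"
    unfolding M_def by blast
  obtain i where i: "i < length x" "x!i = z" "y!i = u" using zu l by (auto simp: in_set_zip)
  obtain j where j: "j < length x" "x!j = z" "y!j = v" using zv l by (auto simp: in_set_zip)
  have "Mrel u v (list_encode x) (list_encode y)" unfolding Mrel_def
    by (rule exI[of _ i], rule conjI, simp add: lenc_enc i, rule exI[of _ j])
       (use i j l in \<open>simp add: lenc_enc nthc_enc\<close>)
  then show "p \<in> Rm (list_encode x) (list_encode y)" unfolding Rm_def p by simp
qed

lemma EqC_M: "EqC (M Q) = (M Q)\<^sup>*"
proof -
  have "M Q \<union> (M Q)\<inverse> = M Q" unfolding M_def by blast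
  then show ?thesis unfolding EqC_def by simp
qed

lemma sub1_ok:
  assumes la: "length a = length b" and lx: "length x = length y"
  shows "sub1 (list_encode a) (list_encode b) (list_encode x) (list_encode y) \<longleftrightarrow> set (zip a b) \<subseteq> set (zip x y)"
proof -
  have "sub1 (list_encode a) (list_encode b) (list_encode x) (list_encode y) \<longleftrightarrow>
     (\<forall>i<length a. \<exists>k<length x. a!i = x!k \<and> b!i = y!k)"
  proof -
    have lb: "i < length b" if "i < length a" for i using that la by simp
    have ly: "k < length y" if "k < length x" for k using that lx by simp
    show ?thesis unfolding sub1_def lenc_enc by (auto simp: nthc_enc lb ly cong: conj_cong)
  qed
  also have "\<dots> \<longleftrightarrow> set (zip a b) \<subseteq> set (zip x y)"
  proof
    assume h: "\<forall>i<length a. \<exists>k<length x. a!i = x!k \<and> b!i = y!k"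
    show "set (zip a b) \<subseteq> set (zip x y)"
    proof
      fix p assume "p \<in> set (zip a b)"
      then obtain i where i: "i < length a" "p = (a!i, b!i)" using la by (auto simp: set_zip)
      then obtain k where "k < length x" "a!i = x!k" "b!i = y!k" using h by blast
      then show "p \<in> set (zip x y)" using i lx by (auto simp: set_zip)
    qed
  next
    assume h: "set (zip a b) \<subseteq> set (zip x y)"
    show "\<forall>i<length a. \<exists>k<length x. a!i = x!k \<and> b!i = y!k"
    proof (intro allI impI)
      fix i assume i: "i < length a"
      then have "(a!i, b!i) \<in> set (zip a b)" using la by (auto simp: set_zip)
      then have "(a!i, b!i) \<in> set (zip x y)" using h by blast
      then obtain k where "k < length x" "x!k = a!i" "y!k = b!i" using lx by (auto simp: set_zip)
      then show "\<exists>k<length x. a!i = x!k \<and> b!i = y!k" by metis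
    qed
  qed
  finally show ?thesis .
qed

lemma sub3_ok:
  assumes la: "length a = length b"
  shows "sub3 (list_encode a) (list_encode b) xc yc \<longleftrightarrow> set (zip a b) \<subseteq> (Rm xc yc)\<^sup>*"
proof -
  have "sub3 (list_encode a) (list_encode b) xc yc \<longleftrightarrow> (\<forall>i<length a. (a!i, b!i) \<in> (Rm xc yc)\<^sup>*)"
    unfolding sub3_def lenc_enc conn_ok using la by (auto simp: nthc_enc)
  also have "\<dots> \<longleftrightarrow> set (zip a b) \<subseteq> (Rm xc yc)\<^sup>*"
  proof
    assume h: "\<forall>i<length a. (a!i, b!i) \<in> (Rm xc yc)\<^sup>*"
    show "set (zip a b) \<subseteq> (Rm xc yc)\<^sup>*"
    proof
      fix p assume "p \<in> set (zip a b)"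
      then obtain i where i: "i < length a" "p = (a!i, b!i)" using la by (auto simp: set_zip)
      then show "p \<in> (Rm xc yc)\<^sup>*" using h by simp
    qed
  next
    assume h: "set (zip a b) \<subseteq> (Rm xc yc)\<^sup>*"
    show "\<forall>i<length a. (a!i, b!i) \<in> (Rm xc yc)\<^sup>*"
    proof (intro allI impI)
      fix i assume i: "i < length a"
      then have "(a!i, b!i) \<in> set (zip a b)" using la by (auto simp: set_zip)
      then show "(a!i, b!i) \<in> (Rm xc yc)\<^sup>*" using h by blast
    qed
  qed
  finally show ?thesis .
qed

lemma atom_ok:
  assumes w: "wf_atom a" and l: "length x = length y"
  shows "(sub1 (list_encode (fst a)) (list_encode (snd a)) (list_encode x) (list_encode y)
    \<or> sub1 (list_encode (fst a)) (list_encode (snd a)) (list_encode y) (list_encode x)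
    \<or> sub3 (list_encode (fst a)) (list_encode (snd a)) (list_encode x) (list_encode y)
    \<or> sub3 (list_encode (fst a)) (list_encode (snd a)) (list_encode y) (list_encode x))
   \<longleftrightarrow> (cset a \<subseteq> set (zip x y) \<or> cset a \<subseteq> (set (zip x y))\<inverse>
     \<or> cset a \<subseteq> EqC (M (set (zip x y))) \<or> cset a \<subseteq> EqC (M ((set (zip x y))\<inverse>)))"
proof -
  have la: "length (fst a) = length (snd a)" using w by (simp add: wf_atom_def)
  have sw: "set (zip y x) = (set (zip x y))\<inverse>" by (auto simp: in_set_zip)
  have l2: "length y = length x" using l by simp
  have e1: "sub1 (list_encode (fst a)) (list_encode (snd a)) (list_encode x) (list_encode y) \<longleftrightarrow> cset a \<subseteq> set (zip x y)"
    unfolding cset_def by (rule sub1_ok[OF la l])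
  have e2: "sub1 (list_encode (fst a)) (list_encode (snd a)) (list_encode y) (list_encode x) \<longleftrightarrow> cset a \<subseteq> (set (zip x y))\<inverse>"
    unfolding cset_def sw[symmetric] by (rule sub1_ok[OF la l2])
  have e3: "sub3 (list_encode (fst a)) (list_encode (snd a)) (list_encode x) (list_encode y) \<longleftrightarrow> cset a \<subseteq> EqC (M (set (zip x y)))"
    unfolding cset_def EqC_M unfolding Rm_M[OF l, symmetric] by (rule sub3_ok[OF la])
  have e4: "sub3 (list_encode (fst a)) (list_encode (snd a)) (list_encode y) (list_encode x) \<longleftrightarrow> cset a \<subseteq> EqC (M ((set (zip x y))\<inverse>))"
    unfolding cset_def EqC_M unfolding sw[symmetric] unfolding Rm_M[OF l2, symmetric] by (rule sub3_ok[OF la])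
  show ?thesis using e1 e2 e3 e4 by simp
qed

lemma Pred_ok:
  assumes w: "\<forall>a\<in>set S. wf_atom a" and l: "length x = length y"
  shows "Pred (encode_instance S (x, y)) \<longleftrightarrow> Good (set S) (set (zip x y))"
proof -
  let ?P = "\<lambda>a. sub1 (list_encode (fst a)) (list_encode (snd a)) (list_encode x) (list_encode y)
    \<or> sub1 (list_encode (fst a)) (list_encode (snd a)) (list_encode y) (list_encode x)
    \<or> sub3 (list_encode (fst a)) (list_encode (snd a)) (list_encode x) (list_encode y)
    \<or> sub3 (list_encode (fst a)) (list_encode (snd a)) (list_encode y) (list_encode x)"
  have n1: "pfst (encode_instance S (x, y)) = list_encode (map encode_atom S)"
    unfolding encode_instance_def by (rule pfst_enc)
  have n2: "psnd (encode_instance S (x, y)) = prod_encode (list_encode x, list_encode y)"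
    unfolding encode_instance_def encode_atom_def encode_tuple_def by (simp add: psnd_enc)
  have n3: "nthc j (list_encode (map encode_atom S)) = prod_encode (list_encode (fst (S!j)), list_encode (snd (S!j)))"
    if "j < length S" for j
    using that by (simp add: nthc_enc encode_atom_def encode_tuple_def)
  have "Pred (encode_instance S (x, y)) \<longleftrightarrow> (\<exists>j<length S. ?P (S!j))"
    unfolding Pred_def n1 n2 by (auto simp: lenc_enc n3 pfst_enc psnd_enc)
  also have "\<dots> \<longleftrightarrow> (\<exists>a\<in>set S. ?P a)" by (metis in_set_conv_nth)
  also have "\<dots> \<longleftrightarrow> Good (set S) (set (zip x y))"
    unfolding Good_def using atom_ok[OF _ l] w by blast
  finally show ?thesis .
qed

theorem theorem2:
  shows "\<exists>f :: recf. \<forall>(S :: atom list) (x :: tuple) (y :: tuple).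
           (\<forall>a \<in> set S. wf_atom a) \<longrightarrow> length x = length y \<longrightarrow>
           eval f [encode_instance S (x, y)] (if derivable (set S) (x, y) then 1 else 0)"
proof -
  obtain f where f: "\<forall>xs. length xs = 1 \<longrightarrow> eval f xs (of_bool (Pred (xs!0)))"
    using rc_Pred unfolding rc_def by blast
  show ?thesis
  proof (intro exI allI impI)
    fix S :: "atom list" and x y :: tuple
    assume w: "\<forall>a \<in> set S. wf_atom a" and l: "length x = length y"
    have "eval f [encode_instance S (x, y)] (of_bool (Pred ([encode_instance S (x, y)]!0)))"
      by (rule f[rule_format]) simp
    then have "eval f [encode_instance S (x, y)] (of_bool (Pred (encode_instance S (x, y))))"
      by (simp only: nth_Cons_0)
    moreover have "(of_bool (Pred (encode_instance S (x, y))) :: nat) = (if derivable (set S) (x, y) then 1 else 0)"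
      using Pred_ok[OF w l] char[OF w l] by simp
    ultimately show "eval f [encode_instance S (x, y)] (if derivable (set S) (x, y) then 1 else 0)"
      by (simp only:)
  qed
qed

end
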